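(* For every integer $n\ge0$ and every non-decreasing sequence $\underline s=(s_1,\dots,s_u)\in S^u$, $$g_n^{(\underline s),\dagger}(w)=\prod_{i=1}^u g_{n_{u,i}}^{(s_i),\dagger}(w).$$
   Context: Fix a prime $p\ge7$ and $k_0\in\{2,\dots,p\}$. $\{n\}$ is the residue of $n$ mod $p-1$ in $\{0,\dots,p-2\}$. $\mathcal K=\{k\ge2:k\equiv k_0\pmod{p-1}\}$, $k_\bullet=(k-k_0)/(p-1)$. For $s\in\{0,\dots,p-2\}$: $a_s=\{k_0-2-2s\}$, $\delta_s=\lfloor\frac{s+\{a_s+s\}}{p-1}\rfloor$; if $a_s+s<p-1$, $t_1^{(s)}=s+\delta_s$, $t_2^{(s)}=a_s+s+\delta_s+2$; otherwise $t_1^{(s)}=\{a_s+s\}+\delta_s+1$, $t_2^{(s)}=s+\delta_s+1$. For $k\in\mathcal K$: $d_k^{ur,\dagger}(s)=\lfloor\frac{k_\bullet-t_1^{(s)}}{p+1}\rfloor+\lfloor\frac{k_\bullet-t_2^{(s)}}{p+1}\rfloor+2+\delta_s$. $S=\{\lceil\frac{k_0+1}{2}\rceil,\dots,\lfloor\frac{k_0+p-4}{2}\rfloor\}$. For a sequence $\underline s=(s_1,\dots,s_u)$ and $k\in\mathcal K$, put $D^{ur}=\sum_id_k^{ur,\dagger}(s_i)$, $D^{Iw}=u(2k_\bullet+2)$, $m_n^{(\underline s),\dagger}(k)=\min\{n-D^{ur},D^{Iw}-D^{ur}-n\}$ if $D^{ur}<n<D^{Iw}-D^{ur}$ and $0$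 otherwise, $w_k=\exp((k-2)p)-1$, $g_n^{(\underline s),\dagger}(w)=\prod_{k\in\mathcal K}(w-w_k)^{m_n^{(\underline s),\dagger}(k)}$ (for $u=1$ write $(s)$). For $n\ge0,u\ge1$, $q=\lfloor n/u\rfloor$: if $q$ even, $n_{u,i}=q$ for $i\le u(q+1)-n$ and $q+1$ otherwise; if $q$ odd, $n_{u,i}=q+1$ for $i\le n-uq$ and $q$ otherwise. *)

theory Defs
  imports "HOL-Computational_Algebra.Computational_Algebra" "HOL-Number_Theory.Number_Theory"
begin

definition resid :: "int \<Rightarrow> int \<Rightarrow> int" where
  "resid p n = n mod (p - 1)"

definition a_s :: "int \<Rightarrow> int \<Rightarrow> int \<Rightarrow> int" where
  "a_s p k0 s = resid p (k0 - 2 - 2 * s)"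

definition delta_s :: "int \<Rightarrow> int \<Rightarrow> int \<Rightarrow> int" where
  "delta_s p k0 s = \<lfloor>real_of_int (s + resid p (a_s p k0 s + s)) / real_of_int (p - 1)\<rfloor>"

definition t1 :: "int \<Rightarrow> int \<Rightarrow> int \<Rightarrow> int" where
  "t1 p k0 s = (if a_s p k0 s + s < p - 1 then s + delta_s p k0 s
                else resid p (a_s p k0 s + s) + delta_s p k0 s + 1)"

definition t2 :: "int \<Rightarrow> int \<Rightarrow> int \<Rightarrow> int" where
  "t2 p k0 s = (if a_s p k0 s + s < p - 1 then a_s p k0 s + s + delta_s p k0 s + 2
                else s + delta_s p k0 s + 1)"

definition Kset :: "int \<Rightarrow> int \<Rightarrow> int set" where
  "Kset p k0 = {k. k \<ge> 2 \<and> [k = k0] (mod (p - 1))}"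

definition kbul :: "int \<Rightarrow> int \<Rightarrow> int \<Rightarrow> int" where
  "kbul p k0 k = (k - k0) div (p - 1)"

definition d_ur :: "int \<Rightarrow> int \<Rightarrow> int \<Rightarrow> int \<Rightarrow> int" where
  "d_ur p k0 s k =
     \<lfloor>real_of_int (kbul p k0 k - t1 p k0 s) / real_of_int (p + 1)\<rfloor>
   + \<lfloor>real_of_int (kbul p k0 k - t2 p k0 s) / real_of_int (p + 1)\<rfloor>
   + 2 + delta_s p k0 s"

definition Sset :: "int \<Rightarrow> int \<Rightarrow> int set" where
  "Sset p k0 = {\<lceil>real_of_int (k0 + 1) / 2\<rceil> .. \<lfloor>real_of_int (k0 + p - 4) / 2\<rfloor>}"

definition D_ur :: "int \<Rightarrow> int \<Rightarrow> int list \<Rightarrow> int \<Rightarrow> int" where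
  "D_ur p k0 ss k = (\<Sum>i<length ss. d_ur p k0 (ss ! i) k)"

definition D_Iw :: "int \<Rightarrow> int \<Rightarrow> int list \<Rightarrow> int \<Rightarrow> int" where
  "D_Iw p k0 ss k = int (length ss) * (2 * kbul p k0 k + 2)"

definition m_dag :: "int \<Rightarrow> int \<Rightarrow> int list \<Rightarrow> nat \<Rightarrow> int \<Rightarrow> int" where
  "m_dag p k0 ss n k =
     (if D_ur p k0 ss k < int n \<and> int n < D_Iw p k0 ss k - D_ur p k0 ss k
      then min (int n - D_ur p k0 ss k) (D_Iw p k0 ss k - D_ur p k0 ss k - int n)
      else 0)"

text \<open>g_n^{(s)}(w) = prod over k in K of (w - w_k)^m; only the (finitely many) k with
  nonzero exponent contribute a factor different from 1.  The weights w_k are a parameter wk.\<close>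
definition g_dag :: "(int \<Rightarrow> 'a::comm_ring_1) \<Rightarrow> int \<Rightarrow> int \<Rightarrow> nat \<Rightarrow> int list \<Rightarrow> 'a poly" where
  "g_dag wk p k0 n ss =
     (\<Prod>k\<in>{k \<in> Kset p k0. m_dag p k0 ss n k \<noteq> 0}. [:- wk k, 1:] ^ nat (m_dag p k0 ss n k))"

text \<open>n_{u,i}, with i 1-indexed\<close>
definition n_ui :: "nat \<Rightarrow> nat \<Rightarrow> nat \<Rightarrow> nat" where
  "n_ui n u i = (let q = n div u in
     if even q then (if i \<le> u * (q + 1) - n then q else q + 1)
     else (if i \<le> n - u * q then q + 1 else q))"

end

theory Submission
  imports Defs
begin

lemma S_iff:
  "s \<in> Sset p k0 \<longleftrightarrow> k0 + 1 \<le> 2*s \<and> 2*s \<le> k0 + p - 4"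
proof -
  have "s \<in> Sset p k0 \<longleftrightarrow> real_of_int (k0+1)/2 \<le> s \<and> s \<le> real_of_int (k0+p-4)/2"
    unfolding Sset_def by (simp add: ceiling_le_iff le_floor_iff)
  also have "\<dots> \<longleftrightarrow> real_of_int (k0 + 1) \<le> real_of_int (2*s) \<and> real_of_int (2*s) \<le> real_of_int (k0 + p - 4)"
    by (simp add: field_simps)
  also have "\<dots> \<longleftrightarrow> k0 + 1 \<le> 2*s \<and> 2*s \<le> k0 + p - 4" by (simp only: of_int_le_iff)
  finally show ?thesis .
qed

lemma div_one: "0 < (m::int) \<Longrightarrow> m \<le> x \<Longrightarrow> x < 2*m \<Longrightarrow> x div m = 1"
proof -
  assume h: "0 < m" "m \<le> x" "x < 2*m"
  have "x div m = ((x - m) + m) div m" by simp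
  also have "\<dots> = (x - m) div m + 1" using h by (simp only: div_add_self2)
  also have "(x - m) div m = 0" using h by (intro div_pos_pos_trivial) auto
  finally show ?thesis by simp
qed

lemma d_ur_S:
  assumes "s \<in> Sset p k0" "2 \<le> k0" "k0 \<le> p" "7 \<le> p"
  shows "d_ur p k0 s k = (kbul p k0 k - s - 1) div (p+1) + (kbul p k0 k + s + 1 - k0) div (p+1) + 2"
proof -
  from assms(1) have s: "k0 + 1 \<le> 2*s" "2*s \<le> k0 + p - 4" by (auto simp: S_iff)
  have a: "a_s p k0 s = k0 - 2 - 2*s + (p - 1)"
  proof -
    have "(k0 - 2 - 2*s) mod (p-1) = (k0 - 2 - 2*s + (p-1)) mod (p-1)" by (simp only: mod_add_self2)
    also have "\<dots> = k0 - 2 - 2*s + (p-1)" using s assms by (intro mod_pos_pos_trivial) auto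
    finally show ?thesis by (simp add: a_s_def resid_def)
  qed
  define kb where "kb = kbul p k0 k"
  show ?thesis
  proof (cases "k0 - 1 \<le> s")
    case True
    have r: "resid p (a_s p k0 s + s) = a_s p k0 s + s" unfolding resid_def a
      using s assms True by (intro mod_pos_pos_trivial) auto
    have dl: "delta_s p k0 s = 1" unfolding delta_s_def floor_divide_of_int_eq r unfolding a
      using s assms True by (intro div_one) auto
    have t1: "t1 p k0 s = s + 1" unfolding t1_def dl a using True by auto
    have t2: "t2 p k0 s = k0 + p - s" unfolding t2_def dl a using True by auto
    have e: "(kb - (k0 + p - s)) div (p+1) + 1 = (kb + s + 1 - k0) div (p+1)"
    proof -
      have "(kb + s + 1 - k0) div (p+1) = ((kb - (k0 + p - s)) + (p+1)) div (p+1)" by (simp add: algebra_simps)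
      also have "\<dots> = (kb - (k0 + p - s)) div (p+1) + 1" using assms by (simp only: div_add_self2)
      finally show ?thesis by simp
    qed
    show ?thesis unfolding d_ur_def t1 t2 dl floor_divide_of_int_eq kb_def[symmetric]
      using e by (simp add: diff_diff_eq[symmetric])
  next
    case False
    have r: "resid p (a_s p k0 s + s) = k0 - 2 - s"
    proof -
      have "(a_s p k0 s + s) mod (p-1) = ((k0 - 2 - s) + (p-1)) mod (p-1)" unfolding a by (simp add: algebra_simps)
      also have "\<dots> = (k0 - 2 - s) mod (p-1)" by (simp only: mod_add_self2)
      also have "\<dots> = k0 - 2 - s" using s assms False by (intro mod_pos_pos_trivial) auto
      finally show ?thesis by (simp add: resid_def)
    qed
    have dl: "delta_s p k0 s = 0" unfolding delta_s_def floor_divide_of_int_eq r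
      using s assms False by (intro div_pos_pos_trivial) auto
    have t1: "t1 p k0 s = k0 - 1 - s" unfolding t1_def dl r using False a by auto
    have t2: "t2 p k0 s = s + 1" unfolding t2_def dl a using False by auto
    show ?thesis unfolding d_ur_def t1 t2 dl floor_divide_of_int_eq kb_def[symmetric]
      by (simp add: algebra_simps)
  qed
qed

lemma m_dag_eq: "m_dag p k0 ss n k = max 0 (int (length ss) * (kbul p k0 k + 1) - D_ur p k0 ss k
     - \<bar>int n - int (length ss) * (kbul p k0 k + 1)\<bar>)"
  unfolding m_dag_def D_Iw_def by (auto simp: algebra_simps abs_if)

lemma D_ur_single: "D_ur p k0 [s] k = d_ur p k0 s k"
  by (simp add: D_ur_def)

lemma div_step: "0 < (P::int) \<Longrightarrow> 0 \<le> y - x \<Longrightarrow> y - x < P \<Longrightarrow> x div P \<le> y div P \<and> y div P \<le> x div P + 1"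
proof -
  assume h: "0 < P" "0 \<le> y - x" "y - x < P"
  have "x div P \<le> y div P" using h by (intro zdiv_mono1) auto
  moreover have "y div P \<le> (x + P) div P" using h by (intro zdiv_mono1) auto
  moreover have "(x + P) div P = x div P + 1" using h by simp
  ultimately show ?thesis by simp
qed

definition dd :: "int \<Rightarrow> int \<Rightarrow> int \<Rightarrow> int \<Rightarrow> int" where
  "dd P k0 kb s = (kb - s - 1) div P + (kb + s + 1 - k0) div P + 2"

lemma dd_props:
  assumes "0 < P" "s \<le> t" "0 \<le> 2*s + 2 - k0" "2*t + 2 - k0 < P"
  shows "\<bar>dd P k0 kb t - dd P k0 kb s\<bar> \<le> 1" "odd (dd P k0 kb s) \<Longrightarrow> dd P k0 kb t = dd P k0 kb s"
proof -
  define As At Bs Bt where "As = kb - s - 1" "At = kb - t - 1" "Bs = kb + s + 1 - k0" "Bt = kb + t + 1 - k0"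
  have 1: "At div P \<le> As div P \<and> As div P \<le> At div P + 1"
    using assms by (intro div_step) (auto simp: As_At_Bs_Bt_def)
  have 2: "Bs div P \<le> Bt div P \<and> Bt div P \<le> Bs div P + 1"
    using assms by (intro div_step) (auto simp: As_At_Bs_Bt_def)
  have 3: "As div P \<le> Bs div P \<and> Bs div P \<le> As div P + 1"
    using assms by (intro div_step) (auto simp: As_At_Bs_Bt_def)
  have 4: "At div P \<le> Bt div P \<and> Bt div P \<le> At div P + 1"
    using assms by (intro div_step) (auto simp: As_At_Bs_Bt_def)
  have ds: "dd P k0 kb s = As div P + Bs div P + 2" "dd P k0 kb t = At div P + Bt div P + 2"
    by (auto simp: dd_def As_At_Bs_Bt_def)
  show "\<bar>dd P k0 kb t - dd P k0 kb s\<bar> \<le> 1" using 1 2 unfolding ds by linarith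
  assume "odd (dd P k0 kb s)"
  moreover have "Bs div P = As div P \<or> Bs div P = As div P + 1" using 3 by linarith
  moreover have "even (As div P + As div P + 2)" by simp
  ultimately have "Bs div P = As div P + 1" unfolding ds by auto
  then show "dd P k0 kb t = dd P k0 kb s" using 1 2 4 unfolding ds by linarith
qed


lemma pair_sign:
  fixes c ds dt a b :: int
  assumes "\<bar>dt - ds\<bar> \<le> 1" "odd ds \<Longrightarrow> dt = ds" "a = b \<or> (even a \<and> \<bar>a - b\<bar> = 1)"
  shows "\<not> (c - ds - \<bar>a - c\<bar> > 0 \<and> c - dt - \<bar>b - c\<bar> < 0) \<and>
         \<not> (c - ds - \<bar>a - c\<bar> < 0 \<and> c - dt - \<bar>b - c\<bar> > 0)"
proof (cases "ds = dt")
  case True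
  then show ?thesis using assms(3) by (auto simp: abs_if)
next
  case False
  show ?thesis
  proof (cases "a = b")
    case True
    then show ?thesis using assms(1) by (auto simp: abs_if)
  next
    case F2: False
    have ea: "even a" and ab: "\<bar>a - b\<bar> = 1" using assms(3) F2 by auto
    have ed: "even ds" using assms(2) False by auto
    have "even (c - \<bar>a - c\<bar>)" using ea by (auto simp: abs_if)
    then have "even (c - ds - \<bar>a - c\<bar>)" using ed by simp
    then obtain y where y: "c - ds - \<bar>a - c\<bar> = 2*y" by (rule evenE)
    show ?thesis using y assms(1) ab by (smt (verit))
  qed
qed

lemma sum_max0:
  fixes x :: "nat \<Rightarrow> int"
  assumes "\<And>i j. i \<in> I \<Longrightarrow> j \<in> I \<Longrightarrow> \<not> (x i > 0 \<and> x j < 0)"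
  shows "(\<Sum>i\<in>I. max 0 (x i)) = max 0 (\<Sum>i\<in>I. x i)"
proof (cases "\<exists>i\<in>I. x i > 0")
  case True
  then have "\<forall>j\<in>I. x j \<ge> 0" using assms by force
  then show ?thesis by (simp add: sum_nonneg)
next
  case False
  then have "\<forall>j\<in>I. x j \<le> 0" by force
  then show ?thesis by (simp add: sum_nonpos)
qed

lemma sum_if_lt: assumes "m \<le> u" shows "(\<Sum>i<u. (if i < m then a else b)) = m * a + (u - m) * (b::nat)"
proof -
  have "{..<u} = {..<m} \<union> {m..<u}" using assms by auto
  then have "(\<Sum>i<u. (if i < m then a else b)) = (\<Sum>i\<in>{..<m} \<union> {m..<u}. (if i < m then a else b))"
    by simp
  also have "\<dots> = (\<Sum>i<m. (if i < m then a else b)) + (\<Sum>i\<in>{m..<u}. (if i < m then a else b))"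
    by (rule sum.union_disjoint) auto
  also have "\<dots> = (\<Sum>i<m. a) + (\<Sum>i\<in>{m..<u}. b)" by (intro arg_cong2[where f="(+)"] sum.cong) auto
  finally show ?thesis by simp
qed

lemma n_ui_range: "n_ui n u i = n div u \<or> n_ui n u i = n div u + 1"
  by (auto simp: n_ui_def Let_def)

lemma n_ui_pair: "i < j \<Longrightarrow> n_ui n u i = n_ui n u j \<or> (even (n_ui n u i) \<and> (n_ui n u j = n_ui n u i + 1 \<or> n_ui n u i = n_ui n u j + 1))"
  by (auto simp: n_ui_def Let_def)

lemma n_ui_sum: assumes "0 < u" shows "(\<Sum>i<u. n_ui n u (i+1)) = n"
proof -
  define q r where "q = n div u" and "r = n mod u"
  have n: "n = u*q + r" and r: "r < u" using assms by (auto simp: q_def r_def)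
  show ?thesis
  proof (cases "even q")
    case True
    have m: "u*(q+1) - n = u - r" using n r by (simp add: algebra_simps)
    have "(\<Sum>i<u. n_ui n u (i+1)) = (\<Sum>i<u. (if i < u - r then q else q+1))"
      unfolding n_ui_def Let_def q_def[symmetric] r_def[symmetric] m using True by (intro sum.cong) auto
    also have "\<dots> = (u - r) * q + r * (q+1)" using r by (simp add: sum_if_lt)
    also have "\<dots> = n" using n r by (simp add: algebra_simps diff_mult_distrib)
    finally show ?thesis .
  next
    case False
    have m: "n - u*q = r" using n r by (simp add: algebra_simps)
    have "(\<Sum>i<u. n_ui n u (i+1)) = (\<Sum>i<u. (if i < r then q+1 else q))"
      unfolding n_ui_def Let_def q_def[symmetric] r_def[symmetric] m using False by (intro sum.cong) auto
    also have "\<dots> = r * (q+1) + (u - r) * q" using r by (simp add: sum_if_lt)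
    also have "\<dots> = n" using n r by (simp add: algebra_simps diff_mult_distrib)
    finally show ?thesis .
  qed
qed


lemma exps:
  assumes p7: "7 \<le> p" and k0: "2 \<le> k0" "k0 \<le> p"
    and ne: "ss \<noteq> []" and so: "sorted ss" and sub: "set ss \<subseteq> Sset p k0"
  shows "m_dag p k0 ss n k = (\<Sum>i<length ss. m_dag p k0 [ss!i] (n_ui n (length ss) (i+1)) k)"
proof -
  define u where "u = length ss"
  define kb where "kb = kbul p k0 k"
  define c where "c = kb + 1"
  define N where "N i = int (n_ui n u (i+1))" for i
  define d where "d i = d_ur p k0 (ss!i) k" for i
  define x where "x i = c - d i - \<bar>N i - c\<bar>" for i
  have u0: "0 < u" using ne by (simp add: u_def)
  have inS: "k0 + 1 \<le> 2*(ss!i) \<and> 2*(ss!i) \<le> k0 + p - 4" if "i < u" for i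
  proof -
    have "ss!i \<in> Sset p k0" using sub that by (auto simp: u_def)
    then show ?thesis by (simp add: S_iff)
  qed
  have dd: "i < u \<Longrightarrow> d i = dd (p+1) k0 kb (ss!i)" for i
    unfolding d_def dd_def kb_def using sub p7 k0 by (intro d_ur_S) (auto simp: u_def)
  have Mi: "m_dag p k0 [ss!i] (n_ui n u (i+1)) k = max 0 (x i)" for i
    unfolding m_dag_eq D_ur_single x_def c_def N_def d_def kb_def by simp
  have M: "m_dag p k0 ss n k = max 0 (int u * c - (\<Sum>i<u. d i) - \<bar>int n - int u * c\<bar>)"
    unfolding m_dag_eq D_ur_def c_def d_def kb_def u_def by simp
  have sumN: "(\<Sum>i<u. N i) = int n" unfolding N_def using n_ui_sum[OF u0, of n]
    by (metis of_nat_sum)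
  have absN: "(\<Sum>i<u. \<bar>N i - c\<bar>) = \<bar>int n - int u * c\<bar>"
  proof (cases "c \<le> int (n div u)")
    case True
    have ge: "N i \<ge> c" for i using n_ui_range[of n u "i+1"] True unfolding N_def by auto
    have "(\<Sum>i<u. \<bar>N i - c\<bar>) = (\<Sum>i<u. N i - c)" using ge by (intro sum.cong) auto
    also have "\<dots> = int n - int u * c" using sumN by (simp add: sum_subtractf)
    finally have E: "(\<Sum>i<u. \<bar>N i - c\<bar>) = int n - int u * c" .
    have "0 \<le> (\<Sum>i<u. \<bar>N i - c\<bar>)" by (rule sum_nonneg) simp
    then show ?thesis using E by simp
  next
    case False
    have le: "N i \<le> c" for i using n_ui_range[of n u "i+1"] False unfolding N_def by auto
    have "(\<Sum>i<u. \<bar>N i - c\<bar>) = (\<Sum>i<u. c - N i)" using le by (intro sum.cong) auto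
    also have "\<dots> = int u * c - int n" using sumN by (simp add: sum_subtractf)
    finally have E: "(\<Sum>i<u. \<bar>N i - c\<bar>) = int u * c - int n" .
    have "0 \<le> (\<Sum>i<u. \<bar>N i - c\<bar>)" by (rule sum_nonneg) simp
    then show ?thesis using E by simp
  qed
  have sumx: "(\<Sum>i<u. x i) = int u * c - (\<Sum>i<u. d i) - \<bar>int n - int u * c\<bar>"
    unfolding x_def sum_subtractf absN[symmetric] by simp
  have pairs: "i < j \<Longrightarrow> j < u \<Longrightarrow> \<not> (x i > 0 \<and> x j < 0) \<and> \<not> (x i < 0 \<and> x j > 0)" for i j
  proof -
    assume ij: "i < j" "j < u"
    have st: "ss!i \<le> ss!j" using so ij by (intro sorted_nth_mono) (auto simp: u_def)
    have P: "\<bar>dd (p+1) k0 kb (ss!j) - dd (p+1) k0 kb (ss!i)\<bar> \<le> 1 \<and>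
        (odd (dd (p+1) k0 kb (ss!i)) \<longrightarrow> dd (p+1) k0 kb (ss!j) = dd (p+1) k0 kb (ss!i))"
      using dd_props[of "p+1" "ss!i" "ss!j" k0 kb] st inS[of i] inS[of j] ij p7 by auto
    have NN: "N i = N j \<or> (even (N i) \<and> \<bar>N i - N j\<bar> = 1)"
      using n_ui_pair[of "i+1" "j+1" n u] ij unfolding N_def by auto
    show ?thesis unfolding x_def using pair_sign[of "d j" "d i" "N i" "N j" c] P NN dd ij by auto
  qed
  have H: "\<And>i j. i \<in> {..<u} \<Longrightarrow> j \<in> {..<u} \<Longrightarrow> \<not> (x i > 0 \<and> x j < 0)"
  proof -
    fix i j assume "i \<in> {..<u}" "j \<in> {..<u}"
    then have "i < u" "j < u" by auto
    consider "i < j" | "i = j" | "j < i" by linarith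
    then show "\<not> (x i > 0 \<and> x j < 0)"
    proof cases
      case 1 then show ?thesis using pairs[of i j] \<open>j < u\<close> by blast
    next
      case 2 then show ?thesis by simp
    next
      case 3 then show ?thesis using pairs[of j i] \<open>i < u\<close> by blast
    qed
  qed
  from sum_max0[of "{..<u}" x, OF H] show ?thesis unfolding M sumx[symmetric] u_def[symmetric] Mi by simp
qed


lemma m_dag_nonneg: "0 \<le> m_dag p k0 ss n k"
  unfolding m_dag_eq by simp

lemma K_repr:
  assumes "k \<in> Kset p k0" "k0 \<le> p" "7 \<le> p"
  shows "k = k0 + (p-1) * kbul p k0 k" "0 \<le> kbul p k0 k"
proof -
  have "(p-1) dvd (k - k0)" using assms(1) by (simp add: Kset_def cong_iff_dvd_diff)
  then obtain t where t: "k - k0 = (p-1)*t" by (auto elim: dvdE)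
  have kb: "kbul p k0 k = t" unfolding kbul_def t using assms by simp
  show "k = k0 + (p-1) * kbul p k0 k" using t kb by simp
  have "k \<ge> 2" using assms(1) by (simp add: Kset_def)
  moreover have "(p-1)*(-1) = 1 - p" by simp
  ultimately have A: "(p-1)*(-1) < (p-1)*t" using t assms by linarith
  have "-1 < t" using mult_left_less_imp_less[OF A] assms by simp
  then have "t > -1" by simp
  then show "0 \<le> kbul p k0 k" using kb by simp
qed

lemma fin_single:
  assumes "s \<in> Sset p k0" "2 \<le> k0" "k0 \<le> p" "7 \<le> p"
  shows "finite {k \<in> Kset p k0. m_dag p k0 [s] N k \<noteq> 0}"
proof (rule finite_subset)
  show "finite {2 .. k0 + (p-1) * ((p+1) * int N)}" by simp
  show "{k \<in> Kset p k0. m_dag p k0 [s] N k \<noteq> 0} \<subseteq> {2 .. k0 + (p-1) * ((p+1) * int N)}"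
  proof
    fix k assume k: "k \<in> {k \<in> Kset p k0. m_dag p k0 [s] N k \<noteq> 0}"
    define kb where "kb = kbul p k0 k"
    define P where "P = p + 1"
    have kr: "k = k0 + (p-1) * kb" "0 \<le> kb" using K_repr[of k p k0] k assms by (auto simp: kb_def)
    have S: "k0 + 1 \<le> 2*s" "2*s \<le> k0 + p - 4" using assms(1) by (auto simp: S_iff)
    have "d_ur p k0 s k < int N" using k unfolding m_dag_def D_ur_single by (auto split: if_splits)
    then have dlt: "(kb - s - 1) div P + (kb + s + 1 - k0) div P + 2 < int N"
      using d_ur_S[OF assms] by (simp add: kb_def P_def)
    have "(P*(-1)) div P \<le> (kb + s + 1 - k0) div P" using S kr assms by (intro zdiv_mono1) (auto simp: P_def)
    moreover have "(P*(-1)) div P = -1" using assms unfolding P_def by (intro nonzero_mult_div_cancel_left) auto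
    ultimately have b1: "-1 \<le> (kb + s + 1 - k0) div P" by simp
    have "(kb + (-1)*P) div P \<le> (kb - s - 1) div P" using S kr assms by (intro zdiv_mono1) (auto simp: P_def)
    moreover have "(kb + (-1)*P) div P = -1 + kb div P" using assms unfolding P_def by (intro div_mult_self1) auto
    ultimately have b2: "kb div P - 1 \<le> (kb - s - 1) div P" by simp
    have "kb div P \<le> int N - 1" using dlt b1 b2 by linarith
    then have "P * (kb div P) \<le> P * (int N - 1)" using assms by (intro mult_left_mono) (auto simp: P_def)
    moreover have "kb = P * (kb div P) + kb mod P" by simp
    moreover have "kb mod P < P" using assms unfolding P_def by (intro pos_mod_bound) auto
    moreover have "P * (int N - 1) = P * int N - P" by (simp add: algebra_simps)
    ultimately have "kb \<le> P * int N" by linarith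
    then have "(p-1) * kb \<le> (p-1) * (P * int N)" using assms by (intro mult_left_mono) auto
    then show "k \<in> {2 .. k0 + (p-1) * ((p+1) * int N)}" using kr k by (auto simp: Kset_def P_def)
  qed
qed


theorem mainTheorem10:
  fixes p k0 :: int and n :: nat and ss :: "int list" and wk :: "int \<Rightarrow> 'a::comm_ring_1"
  assumes "prime p" and "p \<ge> 7" and "2 \<le> k0" and "k0 \<le> p"
    and "ss \<noteq> []" and "sorted ss" and "set ss \<subseteq> Sset p k0"
  shows "g_dag wk p k0 n ss =
           (\<Prod>i<length ss. g_dag wk p k0 (n_ui n (length ss) (i + 1)) [ss ! i])"
proof -
  define u where "u = length ss"
  define K where "K = Kset p k0"
  define X where "X k = [:- wk k, 1:]" for k
  define M where "M k = m_dag p k0 ss n k" for k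
  define Mi where "Mi i k = m_dag p k0 [ss!i] (n_ui n u (i+1)) k" for i k
  define F where "F = {k \<in> K. M k \<noteq> 0}"
  define Fi where "Fi i = {k \<in> K. Mi i k \<noteq> 0}" for i
  have sumM: "k \<in> K \<Longrightarrow> M k = (\<Sum>i<u. Mi i k)" for k
    unfolding M_def Mi_def u_def using exps assms by blast
  have Mi0: "0 \<le> Mi i k" for i k unfolding Mi_def by (rule m_dag_nonneg)
  have finFi: "i < u \<Longrightarrow> finite (Fi i)" for i
    unfolding Fi_def Mi_def K_def using assms by (intro fin_single) (auto simp: u_def)
  have FiF: "i < u \<Longrightarrow> Fi i \<subseteq> F" for i
  proof
    fix k assume i: "i < u" and k: "k \<in> Fi i"
    then have "0 < Mi i k" using Mi0[of i k] by (auto simp: Fi_def)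
    moreover have "Mi i k \<le> (\<Sum>j<u. Mi j k)" using i Mi0 by (intro member_le_sum) auto
    ultimately show "k \<in> F" using sumM k by (auto simp: F_def Fi_def)
  qed
  have FU: "F \<subseteq> (\<Union>i<u. Fi i)"
  proof
    fix k assume k: "k \<in> F"
    show "k \<in> (\<Union>i<u. Fi i)"
    proof (rule ccontr)
      assume "k \<notin> (\<Union>i<u. Fi i)"
      then have "\<forall>i<u. Mi i k = 0" using k by (auto simp: Fi_def F_def)
      then have "(\<Sum>i<u. Mi i k) = 0" by simp
      then show False using k sumM by (auto simp: F_def)
    qed
  qed
  have "finite (\<Union>i<u. Fi i)" using finFi by auto
  then have finF: "finite F" using FU by (rule finite_subset[rotated])
  have LHS: "g_dag wk p k0 n ss = (\<Prod>k\<in>F. X k ^ nat (M k))"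
    unfolding g_dag_def F_def K_def X_def M_def ..
  have RHSi: "g_dag wk p k0 (n_ui n u (i + 1)) [ss ! i] = (\<Prod>k\<in>F. X k ^ nat (Mi i k))" if i: "i < u" for i
  proof -
    have "g_dag wk p k0 (n_ui n u (i + 1)) [ss ! i] = (\<Prod>k\<in>Fi i. X k ^ nat (Mi i k))"
      unfolding g_dag_def Fi_def K_def X_def Mi_def ..
    also have "\<dots> = (\<Prod>k\<in>F. X k ^ nat (Mi i k))"
      using finF FiF[OF i] by (intro prod.mono_neutral_left) (auto simp: Fi_def F_def)
    finally show ?thesis .
  qed
  have "(\<Prod>i<u. g_dag wk p k0 (n_ui n u (i + 1)) [ss ! i]) = (\<Prod>i<u. \<Prod>k\<in>F. X k ^ nat (Mi i k))"
    using RHSi by (intro prod.cong) auto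
  also have "\<dots> = (\<Prod>k\<in>F. \<Prod>i<u. X k ^ nat (Mi i k))" by (rule prod.swap)
  also have "\<dots> = (\<Prod>k\<in>F. X k ^ (\<Sum>i<u. nat (Mi i k)))" by (simp add: power_sum)
  also have "\<dots> = (\<Prod>k\<in>F. X k ^ nat (M k))"
  proof (intro prod.cong refl arg_cong[where f="\<lambda>e. _ ^ e"])
    fix k assume "k \<in> F"
    then have "M k = (\<Sum>i<u. Mi i k)" using sumM by (auto simp: F_def)
    also have "\<dots> = int (\<Sum>i<u. nat (Mi i k))" by (simp add: Mi0)
    finally show "(\<Sum>i<u. nat (Mi i k)) = nat (M k)" by (simp del: of_nat_sum)
  qed
  finally show ?thesis unfolding LHS u_def by simp
qed

end
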